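(* Let $(u^{\mathrm{in}},v^{\mathrm{in}})\in(\dot H^0)^2$ and let $N$ be a positive integer. Then the solution $(u^N,v^N)$ of the Galerkin system $$\partial_t u^N_k=\tfrac12 i\,\mathcal P\Big[k\sum_{k_1+k_2=k}e^{3ikk_1k_2t}\big((\mathcal Pu^N)_{k_1}(\mathcal Pv^N)_{k_2}-(\mathcal Pu^N)_{k_1}(\mathcal Pu^N)_{k_2}\big)\Big],$$ $$\partial_t v^N_k=\tfrac12 i\,\mathcal P\Big[k\sum_{k_1+k_2=k}e^{3ikk_1k_2t}\big((\mathcal Pu^N)_{k_1}(\mathcal Pv^N)_{k_2}-(\mathcal Pv^N)_{k_1}(\mathcal Pv^N)_{k_2}\big)\Big],$$ $k\in\mathbb Z_0$, $u^N_k(0)=u^{\mathrm{in}}_k$, $v^N_k(0)=v^{\mathrm{in}}_k$, exists globally in time. Furthermore, the quantity $$\mathcal E(u^N(t),v^N(t)):=2\|u^N(t)\|_{\dot H^0}^2+2\|v^N(t)\|_{\dot H^0}^2+\|u^N(t)-v^N(t)\|_{\dot H^0}^2$$ is conserved in time.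
   Context: $\mathbb T=[0,2\pi]$ periodic, $\mathbb Z_0=\mathbb Z\setminus\{0\}$. Mean-zero real-valued functions are identified with their Fourier coefficients $(u_k)_{k\in\mathbb Z_0}$, $\overline{u_k}=u_{-k}$. For $s\in\mathbb R$, $\|u\|_{\dot H^s}^2=\sum_{k\in\mathbb Z_0}|k|^{2s}|u_k|^2$, $\dot H^s$ the space of such $u$ with finite norm, and $\|(u,v)\|^2_{(\dot H^s)^2}=\|u\|^2_{\dot H^s}+\|v\|^2_{\dot H^s}$. For the fixed integer $N$, $\mathcal P$ is the projection onto Fourier modes $|k|\leq N$: $(\mathcal Pu)_k=u_k$ if $|k|\leq N$ and $0$ if $|k|>N$; applied to the bracketed sequence indexed by $k$, it sets the $k$-th component to zero when $|k|>N$. The Galerkin system is a finite system of ODEs, locally well-posed in $(\dot H^0)^2$. *)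

theory Defs
  imports "HOL-Analysis.Analysis"
begin

text \<open>Mean-zero real-valued functions on the torus are represented by their Fourier
coefficients, a map int => complex; the (meaningless) zero mode is fixed to 0.\<close>

definition in_H0 :: "(int \<Rightarrow> complex) \<Rightarrow> bool" where
  "in_H0 u \<longleftrightarrow> u 0 = 0 \<and> (\<forall>k. cnj (u k) = u (- k))
     \<and> (\<lambda>k. (cmod (u k))\<^sup>2) summable_on (UNIV - {0})"

definition H0_norm_sq :: "(int \<Rightarrow> complex) \<Rightarrow> real" where
  "H0_norm_sq u = infsum (\<lambda>k. (cmod (u k))\<^sup>2) (UNIV - {0})"

definition Proj :: "nat \<Rightarrow> (int \<Rightarrow> complex) \<Rightarrow> int \<Rightarrow> complex" where
  "Proj N u k = (if \<bar>k\<bar> \<le> int N then u k else 0)"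

definition galerkin_rhs ::
  "nat \<Rightarrow> real \<Rightarrow> (int \<Rightarrow> int \<Rightarrow> complex) \<Rightarrow> int \<Rightarrow> complex" where
  "galerkin_rhs N t B k = Proj N (\<lambda>k. (\<i> / 2) * of_int k *
      infsum (\<lambda>k1. exp (\<i> * of_real (3 * of_int k * of_int k1 * of_int (k - k1) * t)) * B k1 (k - k1))
             {k1. k1 \<noteq> 0 \<and> k - k1 \<noteq> 0}) k"

definition rhs_u :: "nat \<Rightarrow> real \<Rightarrow> (int \<Rightarrow> complex) \<Rightarrow> (int \<Rightarrow> complex) \<Rightarrow> int \<Rightarrow> complex" where
  "rhs_u N t a b = galerkin_rhs N t
     (\<lambda>k1 k2. Proj N a k1 * Proj N b k2 - Proj N a k1 * Proj N a k2)"

definition rhs_v :: "nat \<Rightarrow> real \<Rightarrow> (int \<Rightarrow> complex) \<Rightarrow> (int \<Rightarrow> complex) \<Rightarrow> int \<Rightarrow> complex" where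
  "rhs_v N t a b = galerkin_rhs N t
     (\<lambda>k1 k2. Proj N a k1 * Proj N b k2 - Proj N b k1 * Proj N b k2)"

definition galerkin_solution ::
  "nat \<Rightarrow> (int \<Rightarrow> complex) \<Rightarrow> (int \<Rightarrow> complex) \<Rightarrow> (real \<Rightarrow> int \<Rightarrow> complex) \<Rightarrow> (real \<Rightarrow> int \<Rightarrow> complex) \<Rightarrow> bool" where
  "galerkin_solution N uin vin u v \<longleftrightarrow>
     u 0 = uin \<and> v 0 = vin \<and>
     (\<forall>t\<ge>0. in_H0 (u t) \<and> in_H0 (v t)) \<and>
     (\<forall>t\<ge>0. \<forall>k. ((\<lambda>s. u s k) has_vector_derivative rhs_u N t (u t) (v t) k) (at t within {0..})
              \<and> ((\<lambda>s. v s k) has_vector_derivative rhs_v N t (u t) (v t) k) (at t within {0..}))"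

definition energy :: "(int \<Rightarrow> complex) \<Rightarrow> (int \<Rightarrow> complex) \<Rightarrow> real" where
  "energy u v = 2 * H0_norm_sq u + 2 * H0_norm_sq v + H0_norm_sq (\<lambda>k. u k - v k)"

end

theory Submission
  imports Defs
begin

lemma at_within_Ici_eq:
  fixes t T :: real assumes "0 \<le> t" "t < T"
  shows "at t within {0..} = at t within {0..T}"
  by (rule at_within_nhd[where S="{..<T}"]) (use assms in auto)

lemma integral_deriv_Ici:
  fixes g :: "real \<Rightarrow> 'a::banach"
  assumes "continuous_on {0..} g" "0 \<le> t"
  shows "((\<lambda>u. integral {0..u} g) has_vector_derivative g t) (at t within {0..})"
proof -
  have "continuous_on {0..t+1} g" using assms(1) by (rule continuous_on_subset) auto
  from integral_has_vector_derivative[OF this, of t] assms(2)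
  have "((\<lambda>u. integral {0..u} g) has_vector_derivative g t) (at t within {0..t+1})" by simp
  thus ?thesis using at_within_Ici_eq[of t "t+1"] assms(2) by simp
qed

lemma continuous_on_Ici_intervals:
  fixes f :: "real \<Rightarrow> 'a::topological_space"
  assumes "\<And>T. 0 \<le> T \<Longrightarrow> continuous_on {0..T} f"
  shows "continuous_on {0..} f"
  unfolding continuous_on_eq_continuous_within
proof
  fix t :: real assume "t \<in> {0..}"
  hence t: "0 \<le> t" by simp
  have "continuous (at t within {0..t+1}) f"
    using assms[of "t+1"] t by (auto simp: continuous_on_eq_continuous_within)
  thus "continuous (at t within {0..}) f"
    using at_within_Ici_eq[of t "t+1"] t by (simp add: continuous_within)
qed

lemma integral_power_0:
  fixes t :: real assumes "0 \<le> t"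
  shows "integral {0..t} (\<lambda>s. s ^ n) = t ^ Suc n / Suc n"
proof -
  have d: "((\<lambda>s. s ^ Suc n / Suc n) has_real_derivative x ^ n) (at x within {0..t})" for x :: real
  proof -
    have "((\<lambda>s. s ^ Suc n / Suc n) has_real_derivative (real (Suc n) * x ^ (Suc n - Suc 0)) / Suc n) (at x within {0..t})"
      by (intro DERIV_cdivide DERIV_pow)
    thus ?thesis by simp
  qed
  have "((\<lambda>s. s ^ n) has_integral ((\<lambda>s. s ^ Suc n / Suc n) t - (\<lambda>s. s ^ Suc n / Suc n) 0)) {0..t}"
    by (rule fundamental_theorem_of_calculus) (use assms d in \<open>auto simp: has_real_derivative_iff_has_vector_derivative\<close>)
  thus ?thesis by (simp add: integral_unique)
qed


lemma picard_global:
  fixes F :: "real \<Rightarrow> 'a::banach \<Rightarrow> 'a" and x0 :: 'a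
  assumes cont: "continuous_on UNIV (\<lambda>p. F (fst p) (snd p))"
    and lip: "\<And>t x y. norm (F t x - F t y) \<le> L * norm (x - y)"
    and bnd: "\<And>t x. norm (F t x) \<le> M"
    and L: "0 < L"
  shows "\<exists>X. X 0 = x0 \<and> continuous_on {0..} X \<and>
           (\<forall>t\<ge>0. (X has_vector_derivative F t (X t)) (at t within {0..}))"
proof -
  have M0: "0 \<le> M" using bnd[of 0 x0] by (meson norm_ge_zero order_trans)
  have compF: "continuous_on {0..} (\<lambda>s. F s (y s))" if "continuous_on {0..} y" for y
  proof -
    have "continuous_on {0..} (\<lambda>s. (s, y s))" using that by (intro continuous_intros)
    from continuous_on_compose2[OF cont this] show ?thesis by simp
  qed
  have intF: "(\<lambda>s. F s (y s)) integrable_on {0..t}" if "continuous_on {0..} y" for y t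
    by (rule integrable_continuous_interval, rule continuous_on_subset[OF compF[OF that]]) auto
  have derI: "((\<lambda>u. x0 + integral {0..u} (\<lambda>s. F s (y s))) has_vector_derivative F t (y t)) (at t within {0..})"
    if "continuous_on {0..} y" "0 \<le> t" for y t
    using integral_deriv_Ici[OF compF[OF that(1)] that(2)]
    by (auto intro!: derivative_eq_intros)
  have contI: "continuous_on {0..} (\<lambda>u. x0 + integral {0..u} (\<lambda>s. F s (y s)))"
    if "continuous_on {0..} y" for y
    unfolding continuous_on_eq_continuous_within
    by (auto intro: has_vector_derivative_continuous[OF derI[OF that]])
  define P where "P = rec_nat (\<lambda>t. x0) (\<lambda>n Pn t. x0 + integral {0..t} (\<lambda>s. F s (Pn s)))"
  have P0: "P 0 = (\<lambda>t. x0)" by (simp add: P_def)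
  have PS: "P (Suc n) = (\<lambda>t. x0 + integral {0..t} (\<lambda>s. F s (P n s)))" for n by (simp add: P_def)
  have Pc: "continuous_on {0..} (P n)" for n
  proof (induction n)
    case 0 thus ?case by (simp add: P0)
  next
    case (Suc n) thus ?case unfolding PS by (rule contI)
  qed
  have bound: "norm (P (Suc n) t - P n t) \<le> M * L^n * t^Suc n / fact (Suc n)" if "0 \<le> t" for n t
    using that
  proof (induction n arbitrary: t)
    case 0
    have "norm (P (Suc 0) t - P 0 t) = norm (integral {0..t} (\<lambda>s. F s (P 0 s)))"
      by (simp add: PS P0)
    also have "\<dots> \<le> integral {0..t} (\<lambda>s. M * s ^ 0)"
      by (rule integral_norm_bound_integral) (use bnd intF[OF Pc] in auto)
    also have "\<dots> = M * t" using 0 integral_power_0[of t 0] by (simp add: integral_mult_right)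
    finally show ?case by simp
  next
    case (Suc n)
    have "P (Suc (Suc n)) t - P (Suc n) t = integral {0..t} (\<lambda>s. F s (P (Suc n) s) - F s (P n s))"
      using integral_diff[OF intF[OF Pc[of "Suc n"]] intF[OF Pc[of n]], of t]
      by (simp add: PS[of "Suc n"] PS[of n] del: P_def)
    hence "norm (P (Suc (Suc n)) t - P (Suc n) t) = norm (integral {0..t} (\<lambda>s. F s (P (Suc n) s) - F s (P n s)))"
      by simp
    also have "\<dots> \<le> integral {0..t} (\<lambda>s. (L * (M * L^n / fact (Suc n))) * s ^ Suc n)"
    proof (rule integral_norm_bound_integral)
      show "(\<lambda>s. F s (P (Suc n) s) - F s (P n s)) integrable_on {0..t}"
        by (intro integrable_diff intF Pc)
      show "(\<lambda>s. L * (M * L ^ n / fact (Suc n)) * s ^ Suc n) integrable_on {0..t}"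
        by (intro integrable_continuous_interval continuous_intros)
      fix s assume s: "s \<in> {0..t}"
      have "norm (F s (P (Suc n) s) - F s (P n s)) \<le> L * norm (P (Suc n) s - P n s)" by (rule lip)
      also have "\<dots> \<le> L * (M * L^n * s^Suc n / fact (Suc n))"
        using Suc.IH[of s] s L by (intro mult_left_mono) auto
      finally show "norm (F s (P (Suc n) s) - F s (P n s)) \<le> L * (M * L ^ n / fact (Suc n)) * s ^ Suc n"
        by simp
    qed
    also have "\<dots> = (L * (M * L^n / fact (Suc n))) * (t ^ Suc (Suc n) / Suc (Suc n))"
      using Suc.prems integral_power_0[of t "Suc n"] by (simp only: integral_mult_right)
    also have "\<dots> = M * L ^ Suc n * t ^ Suc (Suc n) / fact (Suc (Suc n))"
      by (simp add: field_simps del: of_nat_Suc)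
    finally show ?case .
  qed
  define X where "X t = x0 + (\<Sum>i. P (Suc i) t - P i t)" for t
  have ul: "uniform_limit {0..T} P X sequentially" if T: "0 \<le> T" for T
  proof -
    define c where "c i = (M / L) * ((L * T) ^ Suc i / fact (Suc i))" for i
    have "summable (\<lambda>i. inverse (fact i) * (L * T) ^ i)" by (rule summable_exp)
    hence "summable (\<lambda>i. (L * T) ^ i / fact i)" by (simp add: field_simps)
    hence "summable (\<lambda>i. (L * T) ^ Suc i / fact (Suc i))"
      by (subst summable_Suc_iff)
    hence sc: "summable c" unfolding c_def by (rule summable_mult)
    have "norm (P (Suc i) t - P i t) \<le> c i" if "t \<in> {0..T}" for i t
    proof -
      have "norm (P (Suc i) t - P i t) \<le> M * L^i * t^Suc i / fact (Suc i)" using that bound by auto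
      also have "\<dots> \<le> M * L^i * T^Suc i / fact (Suc i)"
        using that M0 L by (intro divide_right_mono mult_left_mono power_mono) auto
      also have "\<dots> = c i" using L by (simp add: c_def power_mult_distrib field_simps)
      finally show ?thesis .
    qed
    note cb = this
    have u: "uniform_limit {0..T} (\<lambda>n t. \<Sum>i<n. P (Suc i) t - P i t) (\<lambda>t. \<Sum>i. P (Suc i) t - P i t) sequentially"
      by (rule Weierstrass_m_test[OF cb sc])
    have tel: "(\<Sum>i<n. P (Suc i) t - P i t) = P n t - x0" for n t
      using sum_lessThan_telescope[of "\<lambda>i. P i t" n] by (simp add: P0)
    have de: "dist (\<Sum>i<n. P (Suc i) t - P i t) (\<Sum>i. P (Suc i) t - P i t) = dist (P n t) (X t)" for n t
      unfolding tel X_def dist_norm by (simp add: algebra_simps)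
    show ?thesis
      using u unfolding uniform_limit_iff de .
  qed
  have Xc: "continuous_on {0..} X"
  proof (rule continuous_on_Ici_intervals)
    fix T :: real assume T: "0 \<le> T"
    show "continuous_on {0..T} X"
      by (rule uniform_limit_theorem[OF _ ul[OF T]])
         (auto intro!: always_eventually continuous_on_subset[OF Pc])
  qed
  have inteq: "X t = x0 + integral {0..t} (\<lambda>s. F s (X s))" if t: "0 \<le> t" for t
  proof -
    have ulF: "uniform_limit {0..t} (\<lambda>n s. F s (P n s)) (\<lambda>s. F s (X s)) sequentially"
      unfolding uniform_limit_iff
    proof (intro allI impI)
      fix e :: real assume e: "0 < e"
      have "\<forall>\<^sub>F n in sequentially. \<forall>s\<in>{0..t}. dist (P n s) (X s) < e / L"
        using ul[OF t] e L unfolding uniform_limit_iff by auto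
      thus "\<forall>\<^sub>F n in sequentially. \<forall>s\<in>{0..t}. dist (F s (P n s)) (F s (X s)) < e"
      proof (rule eventually_mono, safe)
        fix n s assume h: "\<forall>s\<in>{0..t}. dist (P n s) (X s) < e / L" "s \<in> {0..t}"
        have "dist (F s (P n s)) (F s (X s)) \<le> L * dist (P n s) (X s)"
          using lip by (simp add: dist_norm)
        also have "\<dots> < L * (e / L)" using h L by (intro mult_strict_left_mono) auto
        finally show "dist (F s (P n s)) (F s (X s)) < e" using L by simp
      qed
    qed
    obtain I J where I: "\<And>n. ((\<lambda>s. F s (P n s)) has_integral I n) {0..t}"
      and J: "((\<lambda>s. F s (X s)) has_integral J) {0..t}" and IJ: "I \<longlonglongrightarrow> J"
      by (rule uniform_limit_integral[OF ulF]) (auto intro!: continuous_on_subset[OF compF[OF Pc]])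
    have "(\<lambda>n. P (Suc n) t) \<longlonglongrightarrow> x0 + J"
    proof -
      have "integral {0..t} (\<lambda>s. F s (P n s)) = I n" for n using I[of n] by (rule integral_unique)
      hence "(\<lambda>n. x0 + integral {0..t} (\<lambda>s. F s (P n s))) = (\<lambda>n. x0 + I n)" by simp
      thus ?thesis unfolding PS using IJ by (simp add: tendsto_add)
    qed
    moreover have "(\<lambda>n. P (Suc n) t) \<longlonglongrightarrow> X t"
      using LIMSEQ_Suc[OF tendsto_uniform_limitI[OF ul[OF t], of t]] t by simp
    ultimately have "X t = x0 + J" using LIMSEQ_unique by blast
    thus ?thesis using J by (simp add: integral_unique)
  qed
  have "X 0 = x0" using inteq[of 0] by simp
  moreover have "(X has_vector_derivative F t (X t)) (at t within {0..})" if "0 \<le> t" for t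
    by (rule has_vector_derivative_transform[OF _ _ derI[OF Xc that]]) (use that inteq in auto)
  ultimately show ?thesis using Xc by blast
qed

definition KS :: "nat \<Rightarrow> int set" where "KS N = {k. k \<noteq> 0 \<and> \<bar>k\<bar> \<le> int N}"
definition Exf :: "real \<Rightarrow> int \<Rightarrow> int \<Rightarrow> complex" where
  "Exf t k k1 = exp (\<i> * of_real (3 * of_int k * of_int k1 * of_int (k - k1) * t))"
definition IS :: "nat \<Rightarrow> int \<Rightarrow> int set" where "IS N k = {k1. k1 \<in> KS N \<and> k - k1 \<in> KS N}"
definition Q :: "nat \<Rightarrow> real \<Rightarrow> (int \<Rightarrow> complex) \<Rightarrow> (int \<Rightarrow> complex) \<Rightarrow> int \<Rightarrow> complex" where
  "Q N t f g k = (\<Sum>k1\<in>IS N k. Exf t k k1 * (f k1 * g (k - k1)))"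
definition Ru :: "nat \<Rightarrow> real \<Rightarrow> (int \<Rightarrow> complex) \<Rightarrow> (int \<Rightarrow> complex) \<Rightarrow> int \<Rightarrow> complex" where
  "Ru N t a b k = (if k \<in> KS N then \<i> / 2 * of_int k * (Q N t a b k - Q N t a a k) else 0)"
definition Rv :: "nat \<Rightarrow> real \<Rightarrow> (int \<Rightarrow> complex) \<Rightarrow> (int \<Rightarrow> complex) \<Rightarrow> int \<Rightarrow> complex" where
  "Rv N t a b k = (if k \<in> KS N then \<i> / 2 * of_int k * (Q N t a b k - Q N t b b k) else 0)"
definition symm :: "(int \<Rightarrow> complex) \<Rightarrow> bool" where "symm f \<longleftrightarrow> (\<forall>k. cnj (f k) = f (- k))"

lemma finite_KS[simp]: "finite (KS N)"
  by (rule finite_subset[of _ "{- int N..int N}"]) (auto simp: KS_def)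
lemma finite_IS[simp]: "finite (IS N k)"
  by (rule finite_subset[of _ "KS N"]) (auto simp: IS_def)
lemma KS_uminus[simp]: "- k \<in> KS N \<longleftrightarrow> k \<in> KS N"
  by (auto simp: KS_def)
lemma zero_notin_KS[simp]: "0 \<notin> KS N" by (simp add: KS_def)

lemma infsum_to_Q:
  "infsum (\<lambda>k1. exp (\<i> * of_real (3 * of_int k * of_int k1 * of_int (k - k1) * t)) *
       (Proj N a k1 * Proj N b (k - k1) - Proj N a k1 * Proj N c (k - k1))) {k1. k1 \<noteq> 0 \<and> k - k1 \<noteq> 0}
   = Q N t a b k - Q N t a c k"
proof -
  let ?f = "\<lambda>k1. exp (\<i> * of_real (3 * of_int k * of_int k1 * of_int (k - k1) * t)) *
       (Proj N a k1 * Proj N b (k - k1) - Proj N a k1 * Proj N c (k - k1))"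
  have "infsum ?f {k1. k1 \<noteq> 0 \<and> k - k1 \<noteq> 0} = infsum ?f (IS N k)"
    by (rule infsum_cong_neutral) (auto simp: IS_def KS_def Proj_def)
  also have "\<dots> = sum ?f (IS N k)" by simp
  also have "\<dots> = (\<Sum>k1\<in>IS N k. Exf t k k1 * (a k1 * b (k - k1)) - Exf t k k1 * (a k1 * c (k - k1)))"
    by (rule sum.cong) (auto simp: IS_def KS_def Proj_def Exf_def algebra_simps)
  also have "\<dots> = Q N t a b k - Q N t a c k" by (simp add: Q_def sum_subtractf)
  finally show ?thesis .
qed

lemma rhs_u_eq: "rhs_u N t a b k = Ru N t a b k"
  unfolding rhs_u_def galerkin_rhs_def Ru_def infsum_to_Q
  by (auto simp: Proj_def KS_def)

lemma rhs_v_eq: "rhs_v N t a b k = Rv N t a b k"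
proof -
  have e: "(\<lambda>k1 k2. Proj N a k1 * Proj N b k2 - Proj N b k1 * Proj N b k2) =
        (\<lambda>k1 k2. Proj N b k2 * Proj N a k1 - Proj N b k2 * Proj N b k1)" by (auto simp: algebra_simps)
  have "infsum (\<lambda>k1. exp (\<i> * of_real (3 * of_int k * of_int k1 * of_int (k - k1) * t)) *
       (Proj N a k1 * Proj N b (k - k1) - Proj N b k1 * Proj N b (k - k1))) {k1. k1 \<noteq> 0 \<and> k - k1 \<noteq> 0}
   = Q N t a b k - Q N t b b k"
  proof -
    let ?f = "\<lambda>k1. exp (\<i> * of_real (3 * of_int k * of_int k1 * of_int (k - k1) * t)) *
       (Proj N a k1 * Proj N b (k - k1) - Proj N b k1 * Proj N b (k - k1))"
    have "infsum ?f {k1. k1 \<noteq> 0 \<and> k - k1 \<noteq> 0} = infsum ?f (IS N k)"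
      by (rule infsum_cong_neutral) (auto simp: IS_def KS_def Proj_def)
    also have "\<dots> = sum ?f (IS N k)" by simp
    also have "\<dots> = (\<Sum>k1\<in>IS N k. Exf t k k1 * (a k1 * b (k - k1)) - Exf t k k1 * (b k1 * b (k - k1)))"
      by (rule sum.cong) (auto simp: IS_def KS_def Proj_def Exf_def algebra_simps)
    also have "\<dots> = Q N t a b k - Q N t b b k" by (simp add: Q_def sum_subtractf)
    finally show ?thesis .
  qed
  thus ?thesis unfolding rhs_v_def galerkin_rhs_def Rv_def
    by (auto simp: Proj_def KS_def)
qed

lemma Exf_eq: "k * k1 * (k - k1) = k' * k1' * (k' - k1') \<Longrightarrow> Exf t k k1 = Exf t k' k1'"
proof -
  assume h: "k * k1 * (k - k1) = k' * k1' * (k' - k1')"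
  have "real_of_int (k * k1 * (k - k1)) = real_of_int (k' * k1' * (k' - k1'))" using h by simp
  hence e: "real_of_int k * real_of_int k1 * real_of_int (k - k1) = real_of_int k' * real_of_int k1' * real_of_int (k' - k1')"
    by (simp only: of_int_mult)
  have "(3 * of_int k * of_int k1 * of_int (k - k1) * t :: real) = 3 * (real_of_int k * real_of_int k1 * real_of_int (k - k1)) * t"
    by (simp only: mult.assoc)
  also have "\<dots> = 3 * (real_of_int k' * real_of_int k1' * real_of_int (k' - k1')) * t" unfolding e ..
  also have "\<dots> = 3 * of_int k' * of_int k1' * of_int (k' - k1') * t" by (simp only: mult.assoc)
  finally show ?thesis unfolding Exf_def by (simp only:)
qed

lemma Exf_cnj: "cnj (Exf t k k1) = Exf t (- k) (- k1)"
proof -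
  have "cnj (Exf t k k1) = exp (- (\<i> * of_real (3 * of_int k * of_int k1 * of_int (k - k1) * t)))"
    unfolding Exf_def exp_cnj by simp
  also have "\<dots> = Exf t (- k) (- k1)" unfolding Exf_def by (simp add: algebra_simps)
  finally show ?thesis .
qed

lemma Q_symm: assumes "symm f" "symm g" shows "Q N t f g (- k) = cnj (Q N t f g k)"
proof -
  have "cnj (Q N t f g k) = (\<Sum>k1\<in>IS N k. Exf t (-k) (-k1) * (f (-k1) * g (-k - (-k1))))"
    unfolding Q_def cnj_sum using assms by (simp add: Exf_cnj symm_def)
  also have "\<dots> = Q N t f g (- k)" unfolding Q_def
    by (rule sum.reindex_bij_witness[of _ uminus uminus]) (auto simp: IS_def KS_def)
  finally show ?thesis by simp
qed

lemma Ru_symm: assumes "symm a" "symm b" shows "symm (Ru N t a b)"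
  unfolding symm_def Ru_def using Q_symm[OF assms(1) assms(2)] Q_symm[OF assms(1) assms(1)]
  by (auto simp: Q_symm)
lemma Rv_symm: assumes "symm a" "symm b" shows "symm (Rv N t a b)"
  unfolding symm_def Rv_def using Q_symm[OF assms(1) assms(2)] Q_symm[OF assms(2) assms(2)]
  by (auto simp: Q_symm)

definition DD :: "nat \<Rightarrow> (int \<times> int) set" where
  "DD N = {p. fst p \<in> KS N \<and> snd p \<in> KS N \<and> fst p + snd p \<in> KS N}"
lemma finite_DD[simp]: "finite (DD N)"
  by (rule finite_subset[of _ "KS N \<times> KS N"]) (auto simp: DD_def)

definition Tr :: "nat \<Rightarrow> real \<Rightarrow> (int \<Rightarrow> complex) \<Rightarrow> (int \<Rightarrow> complex) \<Rightarrow> (int \<Rightarrow> complex) \<Rightarrow> complex" where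
  "Tr N t f g h = (\<Sum>p\<in>DD N. of_int (fst p + snd p) * (Exf t (fst p + snd p) (fst p) * (f (fst p) * g (snd p) * h (- (fst p + snd p)))))"

lemma link: "(\<Sum>k\<in>KS N. h (- k) * (of_int k * Q N t f g k)) = Tr N t f g h"
proof -
  have "(\<Sum>k\<in>KS N. h (- k) * (of_int k * Q N t f g k)) =
        (\<Sum>k\<in>KS N. \<Sum>k1\<in>IS N k. of_int k * (Exf t k k1 * (f k1 * g (k - k1) * h (- k))))"
    unfolding Q_def by (simp add: sum_distrib_left algebra_simps)
  also have "\<dots> = (\<Sum>(k,k1)\<in>Sigma (KS N) (IS N). of_int k * (Exf t k k1 * (f k1 * g (k - k1) * h (- k))))"
    by (rule sum.Sigma) auto
  also have "\<dots> = Tr N t f g h" unfolding Tr_def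
    by (rule sum.reindex_bij_witness[of _ "\<lambda>p. (fst p + snd p, fst p)" "\<lambda>(k,k1). (k1, k - k1)"])
       (auto simp: DD_def IS_def)
  finally show ?thesis .
qed

lemma Tr_cyc: "Tr N t f g h + Tr N t h g f + Tr N t f h g = 0"
proof -
  define C where "C p = Exf t (fst p + snd p) (fst p) * (f (fst p) * g (snd p) * h (- (fst p + snd p)))" for p
  have 1: "Tr N t f g h = (\<Sum>p\<in>DD N. of_int (fst p + snd p) * C p)" unfolding Tr_def C_def ..
  have 2: "Tr N t h g f = (\<Sum>p\<in>DD N. of_int (- fst p) * C p)"
  proof -
    have "(\<Sum>p\<in>DD N. of_int (- fst p) * C p) = Tr N t h g f" unfolding Tr_def
    proof (rule sum.reindex_bij_witness[of _ "\<lambda>p. (- (fst p + snd p), snd p)" "\<lambda>p. (- (fst p + snd p), snd p)"])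
      fix p assume "p \<in> DD N"
      obtain k1 k2 where p: "p = (k1, k2)" by fastforce
      have "Exf t (- k1) (- (k1 + k2)) = Exf t (k1 + k2) k1" by (rule Exf_eq) (simp add: algebra_simps)
      thus "of_int (fst (- (fst p + snd p), snd p) + snd (- (fst p + snd p), snd p)) *
         (Exf t (fst (- (fst p + snd p), snd p) + snd (- (fst p + snd p), snd p)) (fst (- (fst p + snd p), snd p)) *
          (h (fst (- (fst p + snd p), snd p)) * g (snd (- (fst p + snd p), snd p)) *
           f (- (fst (- (fst p + snd p), snd p) + snd (- (fst p + snd p), snd p))))) =
         of_int (- fst p) * C p"
        unfolding C_def p by (simp add: algebra_simps)
    qed (auto simp: DD_def KS_def)
    thus ?thesis by simp
  qed
  have 3: "Tr N t f h g = (\<Sum>p\<in>DD N. of_int (- snd p) * C p)"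
  proof -
    have "(\<Sum>p\<in>DD N. of_int (- snd p) * C p) = Tr N t f h g" unfolding Tr_def
    proof (rule sum.reindex_bij_witness[of _ "\<lambda>p. (fst p, - (fst p + snd p))" "\<lambda>p. (fst p, - (fst p + snd p))"])
      fix p assume "p \<in> DD N"
      obtain k1 k2 where p: "p = (k1, k2)" by fastforce
      have "Exf t (- k2) k1 = Exf t (k1 + k2) k1" by (rule Exf_eq) (simp add: algebra_simps)
      thus "of_int (fst (fst p, - (fst p + snd p)) + snd (fst p, - (fst p + snd p))) *
         (Exf t (fst (fst p, - (fst p + snd p)) + snd (fst p, - (fst p + snd p))) (fst (fst p, - (fst p + snd p))) *
          (f (fst (fst p, - (fst p + snd p))) * h (snd (fst p, - (fst p + snd p))) *
           g (- (fst (fst p, - (fst p + snd p)) + snd (fst p, - (fst p + snd p)))))) =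
         of_int (- snd p) * C p"
        unfolding C_def p by (simp add: algebra_simps)
    qed (auto simp: DD_def KS_def)
    thus ?thesis by simp
  qed
  have "Tr N t f g h + Tr N t h g f + Tr N t f h g =
     (\<Sum>p\<in>DD N. (of_int (fst p + snd p) + of_int (- fst p) + of_int (- snd p)) * C p)"
    unfolding 1 2 3 by (simp only: sum.distrib[symmetric] distrib_right)
  also have "\<dots> = 0" by (rule sum.neutral) (auto simp: algebra_simps)
  finally show ?thesis .
qed

lemma ring_id: "(3 * a' - b') * (c * x * (Qab - Qaa)) + (3 * b' - a') * (c * x * (Qab - Qbb)) =
  c * (3 * (a' * (x * Qab)) - b' * (x * Qab) - 3 * (a' * (x * Qaa)) + b' * (x * Qaa)
        + 3 * (b' * (x * Qab)) - a' * (x * Qab) - 3 * (b' * (x * Qbb)) + a' * (x * Qbb))"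
  for a' b' c x Qab Qaa Qbb :: complex
  by (simp add: algebra_simps)

lemma cancel:
  assumes a: "symm a" and b: "symm b"
  shows "(\<Sum>k\<in>KS N. cnj (3 * a k - b k) * Ru N t a b k + cnj (3 * b k - a k) * Rv N t a b k) = 0"
proof -
  let ?L = "\<lambda>f g h. \<Sum>k\<in>KS N. h (- k) * (of_int k * Q N t f g k)"
  have "(\<Sum>k\<in>KS N. cnj (3 * a k - b k) * Ru N t a b k + cnj (3 * b k - a k) * Rv N t a b k) =
     (\<Sum>k\<in>KS N. \<i>/2 * (3 * (a (-k) * (of_int k * Q N t a b k)) - b (-k) * (of_int k * Q N t a b k)
        - 3 * (a (-k) * (of_int k * Q N t a a k)) + b (-k) * (of_int k * Q N t a a k)
        + 3 * (b (-k) * (of_int k * Q N t a b k)) - a (-k) * (of_int k * Q N t a b k)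
        - 3 * (b (-k) * (of_int k * Q N t b b k)) + a (-k) * (of_int k * Q N t b b k)))"
  proof (rule sum.cong)
    fix k assume k: "k \<in> KS N"
    have "cnj (3 * a k - b k) = 3 * a (-k) - b (-k)" "cnj (3 * b k - a k) = 3 * b (-k) - a (-k)"
      using a b by (simp_all add: symm_def)
    thus "cnj (3 * a k - b k) * Ru N t a b k + cnj (3 * b k - a k) * Rv N t a b k = \<i>/2 * (3 * (a (-k) * (of_int k * Q N t a b k)) - b (-k) * (of_int k * Q N t a b k)
        - 3 * (a (-k) * (of_int k * Q N t a a k)) + b (-k) * (of_int k * Q N t a a k)
        + 3 * (b (-k) * (of_int k * Q N t a b k)) - a (-k) * (of_int k * Q N t a b k)
        - 3 * (b (-k) * (of_int k * Q N t b b k)) + a (-k) * (of_int k * Q N t b b k))"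
      using k unfolding Ru_def Rv_def by (simp only: if_True ring_id)
  qed simp
  also have "\<dots> = \<i>/2 * (3 * ?L a b a - ?L a b b - 3 * ?L a a a + ?L a a b + 3 * ?L a b b - ?L a b a
        - 3 * ?L b b b + ?L b b a)"
    by (simp only: sum.distrib sum_subtractf sum_distrib_left[symmetric])
  also have "\<dots> = \<i>/2 * (3 * Tr N t a b a - Tr N t a b b - 3 * Tr N t a a a + Tr N t a a b + 3 * Tr N t a b b
        - Tr N t a b a - 3 * Tr N t b b b + Tr N t b b a)"
    unfolding link ..
  also have "\<dots> = 0"
  proof -
    have "Tr N t a a a = 0" using Tr_cyc[of N t a a a] by simp
    moreover have "Tr N t b b b = 0" using Tr_cyc[of N t b b b] by simp
    moreover have "Tr N t a a b = - 2 * Tr N t a b a" using Tr_cyc[of N t a b a]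
      by (simp add: algebra_simps add_eq_0_iff2)
    moreover have "Tr N t b b a = - 2 * Tr N t a b b" using Tr_cyc[of N t a b b]
      by (simp add: algebra_simps add_eq_0_iff2)
    ultimately show ?thesis by (simp add: algebra_simps)
  qed
  finally show ?thesis .
qed

definition PhiC :: "nat \<Rightarrow> (int \<Rightarrow> complex) \<Rightarrow> (int \<Rightarrow> complex) \<Rightarrow> complex" where
  "PhiC N a b = (\<Sum>k\<in>KS N. 2 * (a k * cnj (a k)) + 2 * (b k * cnj (b k)) + (a k - b k) * cnj (a k - b k))"
definition EL :: "nat \<Rightarrow> (int \<Rightarrow> complex) \<Rightarrow> (int \<Rightarrow> complex) \<Rightarrow> real" where
  "EL N a b = (\<Sum>k\<in>KS N. 2 * (cmod (a k))\<^sup>2 + 2 * (cmod (b k))\<^sup>2 + (cmod (a k - b k))\<^sup>2)"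

lemma PhiC_EL: "PhiC N a b = of_real (EL N a b)"
  unfolding PhiC_def EL_def complex_norm_square[symmetric] by simp

lemma phi_id: "2 * (a * cnj da + da * cnj a) + 2 * (b * cnj db + db * cnj b) + ((a - b) * cnj (da - db) + (da - db) * cnj (a - b))
   = (cnj (3 * a - b) * da + cnj (3 * b - a) * db) + cnj (cnj (3 * a - b) * da + cnj (3 * b - a) * db)"
  for a b da db :: complex
  by (simp add: algebra_simps)

lemma phi_deriv:
  assumes du: "\<And>k. k \<in> KS N \<Longrightarrow> ((\<lambda>s. u s k) has_vector_derivative du k) (at t within S)"
      and dv: "\<And>k. k \<in> KS N \<Longrightarrow> ((\<lambda>s. v s k) has_vector_derivative dv k) (at t within S)"
  shows "((\<lambda>s. PhiC N (u s) (v s)) has_vector_derivative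
           ((\<Sum>k\<in>KS N. cnj (3 * u t k - v t k) * du k + cnj (3 * v t k - u t k) * dv k)
             + cnj (\<Sum>k\<in>KS N. cnj (3 * u t k - v t k) * du k + cnj (3 * v t k - u t k) * dv k))) (at t within S)"
proof -
  have "((\<lambda>s. PhiC N (u s) (v s)) has_vector_derivative
     (\<Sum>k\<in>KS N. 2 * (u t k * cnj (du k) + du k * cnj (u t k)) + 2 * (v t k * cnj (dv k) + dv k * cnj (v t k))
        + ((u t k - v t k) * cnj (du k - dv k) + (du k - dv k) * cnj (u t k - v t k)))) (at t within S)"
    unfolding PhiC_def
    by (intro has_vector_derivative_sum has_vector_derivative_add has_vector_derivative_mult
         has_vector_derivative_mult_right has_vector_derivative_cnj has_vector_derivative_diff du dv)
  moreover have "(\<Sum>k\<in>KS N. 2 * (u t k * cnj (du k) + du k * cnj (u t k)) + 2 * (v t k * cnj (dv k) + dv k * cnj (v t k))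
        + ((u t k - v t k) * cnj (du k - dv k) + (du k - dv k) * cnj (u t k - v t k))) =
     (\<Sum>k\<in>KS N. cnj (3 * u t k - v t k) * du k + cnj (3 * v t k - u t k) * dv k)
             + cnj (\<Sum>k\<in>KS N. cnj (3 * u t k - v t k) * du k + cnj (3 * v t k - u t k) * dv k)"
  proof -
    define y where "y = (\<lambda>k. cnj (3 * u t k - v t k) * du k + cnj (3 * v t k - u t k) * dv k)"
    have "(\<Sum>k\<in>KS N. 2 * (u t k * cnj (du k) + du k * cnj (u t k)) + 2 * (v t k * cnj (dv k) + dv k * cnj (v t k))
        + ((u t k - v t k) * cnj (du k - dv k) + (du k - dv k) * cnj (u t k - v t k))) = (\<Sum>k\<in>KS N. y k + cnj (y k))"
      by (simp only: phi_id y_def)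
    also have "\<dots> = sum y (KS N) + cnj (sum y (KS N))" by (simp only: sum.distrib cnj_sum)
    finally show ?thesis by (simp only: y_def)
  qed
  ultimately show ?thesis by (rule has_vector_derivative_eq_rhs)
qed

lemma infsum_change:
  fixes f g :: "'a \<Rightarrow> real"
  assumes f: "f summable_on A" and F: "finite F" "F \<subseteq> A" and eq: "\<And>x. x \<in> A \<Longrightarrow> x \<notin> F \<Longrightarrow> g x = f x"
  shows "infsum g A = infsum f A + (\<Sum>x\<in>F. g x - f x)"
    and "g summable_on A"
proof -
  define h where "h x = (if x \<in> F then g x - f x else 0)" for x
  have hs: "h summable_on A"
    by (rule summable_on_cong_neutral[where S=F, THEN iffD1]) (use F in \<open>auto simp: h_def\<close>)
  have hi: "infsum h A = (\<Sum>x\<in>F. g x - f x)"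
  proof -
    have "infsum h A = infsum h F"
      by (rule infsum_cong_neutral) (use F in \<open>auto simp: h_def\<close>)
    also have "\<dots> = (\<Sum>x\<in>F. g x - f x)" using F by (simp add: h_def)
    finally show ?thesis .
  qed
  have geq: "\<And>x. x \<in> A \<Longrightarrow> g x = f x + h x" using eq by (auto simp: h_def)
  have "infsum g A = infsum (\<lambda>x. f x + h x) A" by (rule infsum_cong) (use geq in auto)
  also have "\<dots> = infsum f A + infsum h A" by (rule infsum_add[OF f hs])
  finally show "infsum g A = infsum f A + (\<Sum>x\<in>F. g x - f x)" using hi by simp
  have "(\<lambda>x. f x + h x) summable_on A" by (rule summable_on_add[OF f hs])
  thus "g summable_on A" by (rule summable_on_cong[THEN iffD1, rotated]) (use geq in auto)
qed

lemma diff_sq_summable: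
  assumes "in_H0 a" "in_H0 b"
  shows "(\<lambda>k. (cmod (a k - b k))\<^sup>2) summable_on (UNIV - {0})"
proof (rule summable_on_comparison_test)
  show "(\<lambda>k. 2 * (cmod (a k))\<^sup>2 + 2 * (cmod (b k))\<^sup>2) summable_on (UNIV - {0})"
    using assms unfolding in_H0_def by (intro summable_on_add summable_on_cmult_right) auto
  fix k :: int
  have "cmod (a k - b k) \<le> cmod (a k) + cmod (b k)" by (rule norm_triangle_ineq4)
  hence "(cmod (a k - b k))\<^sup>2 \<le> (cmod (a k) + cmod (b k))\<^sup>2" by (simp add: power_mono)
  also have "\<dots> \<le> 2 * (cmod (a k))\<^sup>2 + 2 * (cmod (b k))\<^sup>2"
  proof -
    have "0 \<le> (cmod (a k) - cmod (b k))\<^sup>2" by simp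
    thus ?thesis unfolding power2_sum power2_diff by linarith
  qed
  finally show "(cmod (a k - b k))\<^sup>2 \<le> 2 * (cmod (a k))\<^sup>2 + 2 * (cmod (b k))\<^sup>2" .
qed simp

lemma energy_split:
  assumes a0: "in_H0 a0" and b0: "in_H0 b0" and eq: "\<And>k. k \<notin> KS N \<Longrightarrow> a k = a0 k \<and> b k = b0 k"
  shows "energy a b = energy a0 b0 + EL N a b - EL N a0 b0"
proof -
  have sub: "KS N \<subseteq> UNIV - {0}" by auto
  have 1: "H0_norm_sq a = H0_norm_sq a0 + (\<Sum>k\<in>KS N. (cmod (a k))\<^sup>2 - (cmod (a0 k))\<^sup>2)"
    unfolding H0_norm_sq_def
    by (rule infsum_change(1)) (use a0 sub eq in \<open>auto simp: in_H0_def\<close>)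
  have 2: "H0_norm_sq b = H0_norm_sq b0 + (\<Sum>k\<in>KS N. (cmod (b k))\<^sup>2 - (cmod (b0 k))\<^sup>2)"
    unfolding H0_norm_sq_def
    by (rule infsum_change(1)) (use b0 sub eq in \<open>auto simp: in_H0_def\<close>)
  have 3: "H0_norm_sq (\<lambda>k. a k - b k) = H0_norm_sq (\<lambda>k. a0 k - b0 k) +
      (\<Sum>k\<in>KS N. (cmod (a k - b k))\<^sup>2 - (cmod (a0 k - b0 k))\<^sup>2)"
    unfolding H0_norm_sq_def
    by (rule infsum_change(1)) (use diff_sq_summable[OF a0 b0] sub eq in auto)
  have 4: "EL N a b - EL N a0 b0 = 2 * (\<Sum>k\<in>KS N. (cmod (a k))\<^sup>2 - (cmod (a0 k))\<^sup>2)
     + 2 * (\<Sum>k\<in>KS N. (cmod (b k))\<^sup>2 - (cmod (b0 k))\<^sup>2)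
     + (\<Sum>k\<in>KS N. (cmod (a k - b k))\<^sup>2 - (cmod (a0 k - b0 k))\<^sup>2)"
    unfolding EL_def sum_distrib_left sum.distrib[symmetric] sum_subtractf[symmetric]
    by (rule sum.cong) (simp_all add: algebra_simps)
  have aux: "\<And>x x0 s1 y y0 s2 z z0 s3 e e0 :: real. x = x0 + s1 \<Longrightarrow> y = y0 + s2 \<Longrightarrow> z = z0 + s3 \<Longrightarrow>
     e - e0 = 2 * s1 + 2 * s2 + s3 \<Longrightarrow> 2*x+2*y+z = 2*x0+2*y0+z0 + e - e0" by linarith
  show ?thesis unfolding energy_def by (rule aux[OF 1 2 3 4])
qed

lemma const_on_Ici:
  fixes f :: "real \<Rightarrow> 'a::real_normed_vector"
  assumes "\<And>s. 0 \<le> s \<Longrightarrow> (f has_vector_derivative 0) (at s within {0..})" "0 \<le> t"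
  shows "f t = f 0"
proof -
  obtain c where "\<And>x. x \<in> {0..} \<Longrightarrow> f x = c"
    by (rule has_vector_derivative_zero_constant[of "{0..}" f]) (use assms in auto)
  thus ?thesis using assms(2) by force
qed

lemma conservation:
  assumes sol: "galerkin_solution N uin vin u v" and ui: "in_H0 uin" and vi: "in_H0 vin" and t: "0 \<le> t"
  shows "energy (u t) (v t) = energy uin vin"
proof -
  from sol have u0: "u 0 = uin" and v0: "v 0 = vin"
    and H: "\<And>s. 0 \<le> s \<Longrightarrow> in_H0 (u s) \<and> in_H0 (v s)"
    and D: "\<And>s k. 0 \<le> s \<Longrightarrow> ((\<lambda>s. u s k) has_vector_derivative rhs_u N s (u s) (v s) k) (at s within {0..})
              \<and> ((\<lambda>s. v s k) has_vector_derivative rhs_v N s (u s) (v s) k) (at s within {0..})"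
    unfolding galerkin_solution_def by auto
  have sy: "symm (u s)" "symm (v s)" if "0 \<le> s" for s
    using H[OF that] by (auto simp: in_H0_def symm_def)
  have hi: "u t k = uin k \<and> v t k = vin k" if k: "k \<notin> KS N" for k
  proof -
    have "(\<lambda>s. u s k) t = (\<lambda>s. u s k) 0"
    proof (rule const_on_Ici[OF _ t])
      fix s :: real assume "0 \<le> s"
      thus "((\<lambda>s. u s k) has_vector_derivative 0) (at s within {0..})"
        using D[of s k] k by (simp add: rhs_u_eq Ru_def)
    qed
    moreover have "(\<lambda>s. v s k) t = (\<lambda>s. v s k) 0"
    proof (rule const_on_Ici[OF _ t])
      fix s :: real assume "0 \<le> s"
      thus "((\<lambda>s. v s k) has_vector_derivative 0) (at s within {0..})"
        using D[of s k] k by (simp add: rhs_v_eq Rv_def)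
    qed
    ultimately show ?thesis using u0 v0 by simp
  qed
  have "(\<lambda>s. PhiC N (u s) (v s)) t = (\<lambda>s. PhiC N (u s) (v s)) 0"
  proof (rule const_on_Ici[OF _ t])
    fix s :: real assume s: "0 \<le> s"
    have "((\<lambda>s. PhiC N (u s) (v s)) has_vector_derivative
           ((\<Sum>k\<in>KS N. cnj (3 * u s k - v s k) * Ru N s (u s) (v s) k + cnj (3 * v s k - u s k) * Rv N s (u s) (v s) k)
             + cnj (\<Sum>k\<in>KS N. cnj (3 * u s k - v s k) * Ru N s (u s) (v s) k + cnj (3 * v s k - u s k) * Rv N s (u s) (v s) k))) (at s within {0..})"
      by (rule phi_deriv) (use D[OF s] in \<open>auto simp: rhs_u_eq rhs_v_eq\<close>)
    thus "((\<lambda>s. PhiC N (u s) (v s)) has_vector_derivative 0) (at s within {0..})"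
      unfolding cancel[OF sy[OF s]] by simp
  qed
  hence "EL N (u t) (v t) = EL N uin vin" using u0 v0 by (simp add: PhiC_EL)
  moreover have "energy (u t) (v t) = energy uin vin + EL N (u t) (v t) - EL N uin vin"
    by (rule energy_split[OF ui vi]) (use hi in auto)
  ultimately show ?thesis by simp
qed

instance bcontfun :: (metric_space, banach) banach ..

type_synonym bfun = "real \<Rightarrow>\<^sub>C complex"

definition tent :: "int \<Rightarrow> real \<Rightarrow> real" where "tent k x = max 0 (1 - \<bar>x - of_int k\<bar>)"

lemma tent_int[simp]: "tent k (of_int j) = (if j = k then 1 else 0)"
proof -
  have "j \<noteq> k \<Longrightarrow> 1 \<le> \<bar>real_of_int j - real_of_int k\<bar>"
    by (metis of_int_1_le_iff of_int_abs of_int_diff zero_less_abs_iff int_one_le_iff_zero_less eq_iff_diff_eq_0)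
  thus ?thesis by (auto simp: tent_def)
qed

lemma tent_bound: "\<bar>tent k x\<bar> \<le> 1" by (simp add: tent_def)

definition dl :: "int \<Rightarrow> complex \<Rightarrow> bfun" where
  "dl k z = Bcontfun (\<lambda>x. z * of_real (tent k x))"

lemma dl_rep: "apply_bcontfun (dl k z) = (\<lambda>x. z * of_real (tent k x))"
proof -
  have "(\<lambda>x. z * of_real (tent k x)) \<in> bcontfun"
  proof (rule bcontfun_normI[where b="cmod z"])
    show "continuous_on UNIV (\<lambda>x. z * complex_of_real (tent k x))"
      unfolding tent_def by (intro continuous_intros)
    fix x :: real
    show "cmod (z * complex_of_real (tent k x)) \<le> cmod z"
      using tent_bound[of k x] by (simp add: norm_mult mult_left_le)
  qed
  thus ?thesis unfolding dl_def by (simp add: Bcontfun_inverse)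
qed

lemma dl_apply[simp]: "apply_bcontfun (dl k z) (of_int j) = (if j = k then z else 0)"
  by (simp add: dl_rep)

lemma dl_diff: "dl k z - dl k w = dl k (z - w)"
  by (rule bcontfun_eqI) (simp add: dl_rep algebra_simps)

lemma dl_norm: "norm (dl k z) \<le> cmod z"
  by (rule norm_bound) (simp add: dl_rep norm_mult mult_left_le tent_bound)

lemma sum_apply_bcontfun: "apply_bcontfun (sum f A) j = (\<Sum>i\<in>A. apply_bcontfun (f i) j)"
  for f :: "'i \<Rightarrow> bfun"
  by (induction A rule: infinite_finite_induct) simp_all

lemma bounded_linear_apply: "bounded_linear (\<lambda>g::bfun. apply_bcontfun g j)"
  by (rule bounded_linear_intro[where K=1]) (auto intro: norm_bounded)

lemma bounded_linear_dl: "bounded_linear (dl k)"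
  by (rule bounded_linear_intro[where K=1])
     (auto intro!: bcontfun_eqI simp: dl_norm dl_rep scaleR_conv_of_real algebra_simps)

lemma cont_apply[continuous_intros]:
  "continuous_on S f \<Longrightarrow> continuous_on S (\<lambda>p. apply_bcontfun (f p) j)"
  for f :: "'a::topological_space \<Rightarrow> bfun"
  by (rule continuous_on_compose2[OF linear_continuous_on[OF bounded_linear_apply]]) auto

lemma cont_dl[continuous_intros]:
  "continuous_on S f \<Longrightarrow> continuous_on S (\<lambda>p. dl k (f p))"
  by (rule continuous_on_compose2[OF linear_continuous_on[OF bounded_linear_dl]]) auto

definition rr :: "real \<Rightarrow> 'a::real_normed_vector \<Rightarrow> 'a" where
  "rr R x = (if norm x \<le> R then x else (R / norm x) *\<^sub>R x)"

lemma rr_norm: "0 < R \<Longrightarrow> norm (rr R x) \<le> R"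
  by (auto simp: rr_def)

lemma rr_scale: "rr R x = (if norm x \<le> R then 1 else R / norm x) *\<^sub>R x"
  by (simp add: rr_def)

lemma rr_lip1:
  fixes x y :: "'a::real_normed_vector"
  assumes R: "0 < R" and x: "norm x > R" and y: "norm y \<le> R"
  shows "norm ((R / norm x) *\<^sub>R x - y) \<le> 2 * norm (x - y)"
proof -
  have nx: "norm x > 0" using R x by linarith
  have "norm ((R / norm x) *\<^sub>R x - x) = norm ((R / norm x - 1) *\<^sub>R x)" by (simp add: algebra_simps)
  also have "\<dots> = \<bar>R / norm x - 1\<bar> * norm x" by simp
  also have "\<dots> = norm x - R" using nx x by (simp add: abs_if field_simps)
  finally have 1: "norm ((R / norm x) *\<^sub>R x - x) = norm x - R" .
  have "norm ((R / norm x) *\<^sub>R x - y) \<le> norm ((R / norm x) *\<^sub>R x - x) + norm (x - y)"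
    using norm_triangle_ineq[of "(R / norm x) *\<^sub>R x - x" "x - y"] by simp
  also have "\<dots> \<le> (norm x - norm y) + norm (x - y)" unfolding 1 using y by simp
  also have "\<dots> \<le> 2 * norm (x - y)" using norm_triangle_ineq2[of x y] by simp
  finally show ?thesis .
qed

lemma rr_lip2:
  fixes x y :: "'a::real_normed_vector"
  assumes R: "0 < R" and x: "norm x > R" and y: "norm y > R"
  shows "norm ((R / norm x) *\<^sub>R x - (R / norm y) *\<^sub>R y) \<le> 2 * norm (x - y)"
proof -
  have nx: "norm x > 0" and ny: "norm y > 0" using R x y by linarith+
  have "norm ((R / norm x) *\<^sub>R x - (R / norm y) *\<^sub>R y) \<le>
        norm ((R / norm x) *\<^sub>R x - (R / norm x) *\<^sub>R y) + norm ((R / norm x) *\<^sub>R y - (R / norm y) *\<^sub>R y)"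
    using norm_triangle_ineq[of "(R / norm x) *\<^sub>R x - (R / norm x) *\<^sub>R y" "(R / norm x) *\<^sub>R y - (R / norm y) *\<^sub>R y"] by simp
  also have "norm ((R / norm x) *\<^sub>R x - (R / norm x) *\<^sub>R y) = (R / norm x) * norm (x - y)"
    using R nx by (simp add: scaleR_diff_right[symmetric])
  also have "\<dots> \<le> norm (x - y)" using R x nx by (simp add: field_simps mult_right_mono)
  also have "norm ((R / norm x) *\<^sub>R y - (R / norm y) *\<^sub>R y) = \<bar>R / norm x - R / norm y\<bar> * norm y"
    by (simp add: scaleR_diff_left[symmetric])
  also have "\<dots> = R * \<bar>norm y - norm x\<bar> / norm x"
  proof -
    have "\<bar>R / norm x - R / norm y\<bar> * norm y = \<bar>(R / norm x - R / norm y) * norm y\<bar>" using ny by (simp add: abs_mult)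
    also have "(R / norm x - R / norm y) * norm y = R * (norm y - norm x) / norm x" using nx ny by (simp add: field_simps)
    also have "\<bar>R * (norm y - norm x) / norm x\<bar> = R * \<bar>norm y - norm x\<bar> / norm x" using nx R by (simp add: abs_mult)
    finally show ?thesis .
  qed
  also have "\<dots> \<le> \<bar>norm y - norm x\<bar>" using R x nx by (simp add: field_simps mult_right_mono)
  also have "\<dots> \<le> norm (x - y)" by (metis abs_minus_commute norm_triangle_ineq3)
  finally show ?thesis by simp
qed

lemma rr_lip:
  fixes x y :: "'a::real_normed_vector"
  assumes R: "0 < R"
  shows "norm (rr R x - rr R y) \<le> 2 * norm (x - y)"
proof (cases "norm x \<le> R")
  case True
  show ?thesis
  proof (cases "norm y \<le> R")
    case True with \<open>norm x \<le> R\<close> show ?thesis by (simp add: rr_def)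
  next
    case False
    have "norm ((R / norm y) *\<^sub>R y - x) \<le> 2 * norm (y - x)" using rr_lip1[OF R _ True] False by simp
    thus ?thesis using True False by (simp add: rr_def norm_minus_commute)
  qed
next
  case False
  show ?thesis
  proof (cases "norm y \<le> R")
    case True
    thus ?thesis using rr_lip1[OF R _ True, of x] False by (simp add: rr_def)
  next
    case False2: False
    thus ?thesis using rr_lip2[OF R _ _, of x y] False by (simp add: rr_def)
  qed
qed

lemma rr_cont: "0 < R \<Longrightarrow> continuous_on UNIV (rr R :: 'a::real_normed_vector \<Rightarrow> 'a)"
  by (rule lipschitz_on_continuous_on[of 2], rule lipschitz_onI)
     (auto simp: dist_norm rr_lip)

definition sy :: "(int \<Rightarrow> complex) \<Rightarrow> int \<Rightarrow> complex" where "sy f k = (f k + cnj (f (- k))) / 2"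
definition cu :: "bfun \<times> bfun \<Rightarrow> int \<Rightarrow> complex" where "cu x j = apply_bcontfun (fst x) (of_int j)"
definition cv :: "bfun \<times> bfun \<Rightarrow> int \<Rightarrow> complex" where "cv x j = apply_bcontfun (snd x) (of_int j)"
definition compu :: "nat \<Rightarrow> real \<Rightarrow> bfun \<times> bfun \<Rightarrow> int \<Rightarrow> complex" where
  "compu N t x k = sy (Ru N t (sy (cu x)) (sy (cv x))) k"
definition compv :: "nat \<Rightarrow> real \<Rightarrow> bfun \<times> bfun \<Rightarrow> int \<Rightarrow> complex" where
  "compv N t x k = sy (Rv N t (sy (cu x)) (sy (cv x))) k"
definition Fc :: "nat \<Rightarrow> real \<Rightarrow> bfun \<times> bfun \<Rightarrow> bfun \<times> bfun" where
  "Fc N t x = ((\<Sum>k\<in>KS N. dl k (compu N t x k)), (\<Sum>k\<in>KS N. dl k (compv N t x k)))"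

lemma norm_Exf[simp]: "cmod (Exf t k k1) = 1"
  unfolding Exf_def by simp

lemma prod_bound: fixes \<rho> d :: real shows "cmod f \<le> \<rho> \<Longrightarrow> cmod g' \<le> \<rho> \<Longrightarrow> cmod (f - f') \<le> d \<Longrightarrow> cmod (g - g') \<le> d
   \<Longrightarrow> cmod (f * g - f' * g') \<le> 2 * \<rho> * d"
proof -
  assume h: "cmod f \<le> \<rho>" "cmod g' \<le> \<rho>" "cmod (f - f') \<le> d" "cmod (g - g') \<le> d"
  have "f * g - f' * g' = f * (g - g') + (f - f') * g'" by (simp add: algebra_simps)
  hence "cmod (f * g - f' * g') \<le> cmod f * cmod (g - g') + cmod (f - f') * cmod g'"
    by (metis norm_mult norm_triangle_ineq)
  also have "\<dots> \<le> \<rho> * d + d * \<rho>"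
    using h by (intro add_mono mult_mono) (auto intro: order_trans[OF norm_ge_zero])
  finally show ?thesis by simp
qed

lemma Q_lip:
  fixes \<rho> d :: real
  assumes "\<And>j. cmod (f j) \<le> \<rho>" "\<And>j. cmod (g' j) \<le> \<rho>"
    "\<And>j. cmod (f j - f' j) \<le> d" "\<And>j. cmod (g j - g' j) \<le> d" "0 \<le> \<rho>" "0 \<le> d"
  shows "cmod (Q N t f g k - Q N t f' g' k) \<le> real (card (KS N)) * (2 * \<rho> * d)"
proof -
  have "Q N t f g k - Q N t f' g' k = (\<Sum>k1\<in>IS N k. Exf t k k1 * (f k1 * g (k - k1) - f' k1 * g' (k - k1)))"
    unfolding Q_def by (simp add: sum_subtractf right_diff_distrib)
  hence "cmod (Q N t f g k - Q N t f' g' k) \<le> (\<Sum>k1\<in>IS N k. cmod (Exf t k k1 * (f k1 * g (k - k1) - f' k1 * g' (k - k1))))"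
    by (simp add: norm_sum)
  also have "\<dots> \<le> (\<Sum>k1\<in>IS N k. 2 * \<rho> * d)"
    by (rule sum_mono) (simp add: norm_mult prod_bound assms)
  also have "\<dots> = real (card (IS N k)) * (2 * \<rho> * d)" by simp
  also have "\<dots> \<le> real (card (KS N)) * (2 * \<rho> * d)"
    using assms by (intro mult_right_mono) (auto intro!: card_mono simp: IS_def)
  finally show ?thesis .
qed

lemma Rdiff_bound:
  fixes c X Y :: complex
  assumes "cmod c \<le> A" "cmod X \<le> C" "cmod Y \<le> C"
  shows "cmod (c * (X - Y)) \<le> A * (C + C)"
proof -
  have "cmod (X - Y) \<le> C + C" using norm_triangle_ineq4[of X Y] assms by linarith
  thus ?thesis unfolding norm_mult using assms(1) by (intro mult_mono) (auto intro: order_trans[OF norm_ge_zero])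
qed

lemma Ru_lip:
  fixes \<rho> d :: real
  assumes "\<And>j. cmod (a j) \<le> \<rho>" "\<And>j. cmod (b j) \<le> \<rho>" "\<And>j. cmod (a' j) \<le> \<rho>" "\<And>j. cmod (b' j) \<le> \<rho>"
    "\<And>j. cmod (a j - a' j) \<le> d" "\<And>j. cmod (b j - b' j) \<le> d" "0 \<le> \<rho>" "0 \<le> d"
  shows "cmod (Ru N t a b k - Ru N t a' b' k) \<le> real N * (real (card (KS N)) * (2 * \<rho> * d))"
    and "cmod (Rv N t a b k - Rv N t a' b' k) \<le> real N * (real (card (KS N)) * (2 * \<rho> * d))"
proof -
  let ?C = "real (card (KS N)) * (2 * \<rho> * d)"
  have q1: "cmod (Q N t a b k - Q N t a' b' k) \<le> ?C" by (rule Q_lip) (use assms in auto)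
  have q2: "cmod (Q N t a a k - Q N t a' a' k) \<le> ?C" by (rule Q_lip) (use assms in auto)
  have q3: "cmod (Q N t b b k - Q N t b' b' k) \<le> ?C" by (rule Q_lip) (use assms in auto)
  have kb: "k \<in> KS N \<Longrightarrow> cmod (\<i> / 2 * of_int k) \<le> real N / 2"
  proof -
    assume "k \<in> KS N"
    hence "\<bar>k\<bar> \<le> int N" by (simp add: KS_def)
    hence "\<bar>real_of_int k\<bar> \<le> real N" by (metis of_int_abs of_int_le_iff of_int_of_nat_eq)
    thus ?thesis by (simp add: norm_mult norm_divide)
  qed
  have C0: "0 \<le> ?C" using assms by simp
  show "cmod (Ru N t a b k - Ru N t a' b' k) \<le> real N * ?C"
  proof (cases "k \<in> KS N")
    case True
    have "Ru N t a b k - Ru N t a' b' k = \<i> / 2 * of_int k * ((Q N t a b k - Q N t a' b' k) - (Q N t a a k - Q N t a' a' k))"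
      using True by (simp add: Ru_def algebra_simps)
    also have "cmod \<dots> \<le> real N / 2 * (?C + ?C)"
      by (rule Rdiff_bound[OF kb[OF True] q1 q2])
    also have "\<dots> = real N * ?C" by simp
    finally show ?thesis .
  qed (use C0 in \<open>simp add: Ru_def\<close>)
  show "cmod (Rv N t a b k - Rv N t a' b' k) \<le> real N * ?C"
  proof (cases "k \<in> KS N")
    case True
    have "Rv N t a b k - Rv N t a' b' k = \<i> / 2 * of_int k * ((Q N t a b k - Q N t a' b' k) - (Q N t b b k - Q N t b' b' k))"
      using True by (simp add: Rv_def algebra_simps)
    also have "cmod \<dots> \<le> real N / 2 * (?C + ?C)"
      by (rule Rdiff_bound[OF kb[OF True] q1 q3])
    also have "\<dots> = real N * ?C" by simp
    finally show ?thesis .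
  qed (use C0 in \<open>simp add: Rv_def\<close>)
qed

lemma sy_bound: "(\<And>j. cmod (f j) \<le> \<rho>) \<Longrightarrow> cmod (sy f k) \<le> \<rho>"
proof -
  assume h: "\<And>j. cmod (f j) \<le> \<rho>"
  have "cmod (f k + cnj (f (- k))) \<le> cmod (f k) + cmod (cnj (f (- k)))" by (rule norm_triangle_ineq)
  hence "cmod (sy f k) \<le> (cmod (f k) + cmod (cnj (f (- k)))) / 2"
    unfolding sy_def norm_divide by simp
  also have "\<dots> \<le> (\<rho> + \<rho>) / 2" using h[of k] h[of "-k"] by simp
  finally show ?thesis by simp
qed

lemma sy_lip: "(\<And>j. cmod (f j - f' j) \<le> d) \<Longrightarrow> cmod (sy f k - sy f' k) \<le> d"
proof -
  assume h: "\<And>j. cmod (f j - f' j) \<le> d"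
  have "sy f k - sy f' k = ((f k - f' k) + cnj (f (- k) - f' (- k))) / 2"
    unfolding sy_def by (simp add: field_simps)
  moreover have "cmod ((f k - f' k) + cnj (f (- k) - f' (- k))) \<le> cmod (f k - f' k) + cmod (cnj (f (- k) - f' (- k)))"
    by (rule norm_triangle_ineq)
  ultimately have "cmod (sy f k - sy f' k) \<le> (cmod (f k - f' k) + cmod (cnj (f (- k) - f' (- k)))) / 2"
    unfolding norm_divide by (simp only:) simp
  also have "\<dots> \<le> (d + d) / 2" using h[of k] h[of "-k"] by (simp only: complex_mod_cnj) simp
  finally show ?thesis by simp
qed

lemma norm_fst_le': "norm (fst z) \<le> norm z" and norm_snd_le': "norm (snd z) \<le> norm z"
  using norm_fst_le[of "fst z" "snd z"] norm_snd_le[of "snd z" "fst z"] by simp_all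

lemma cu_bound: "cmod (cu x j) \<le> norm x" "cmod (cv x j) \<le> norm x"
  unfolding cu_def cv_def
  by (rule order_trans[OF norm_bounded norm_fst_le'], rule order_trans[OF norm_bounded norm_snd_le'])

lemma cu_lip: "cmod (cu x j - cu y j) \<le> norm (x - y)" "cmod (cv x j - cv y j) \<le> norm (x - y)"
proof -
  have "cu x j - cu y j = apply_bcontfun (fst (x - y)) (of_int j)" by (simp add: cu_def)
  thus "cmod (cu x j - cu y j) \<le> norm (x - y)" using order_trans[OF norm_bounded norm_fst_le'] by metis
  have "cv x j - cv y j = apply_bcontfun (snd (x - y)) (of_int j)" by (simp add: cv_def)
  thus "cmod (cv x j - cv y j) \<le> norm (x - y)" using order_trans[OF norm_bounded norm_snd_le'] by metis
qed

lemma comp_lip: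
  assumes "norm x \<le> R" "norm y \<le> R" "0 \<le> R"
  shows "cmod (compu N t x k - compu N t y k) \<le> real N * (real (card (KS N)) * (2 * R * norm (x - y)))"
    and "cmod (compv N t x k - compv N t y k) \<le> real N * (real (card (KS N)) * (2 * R * norm (x - y)))"
proof -
  have b: "\<And>j. cmod (sy (cu x) j) \<le> R" "\<And>j. cmod (sy (cv x) j) \<le> R"
     "\<And>j. cmod (sy (cu y) j) \<le> R" "\<And>j. cmod (sy (cv y) j) \<le> R"
    using assms by (auto intro!: sy_bound order_trans[OF cu_bound(1)] order_trans[OF cu_bound(2)])
  have l: "\<And>j. cmod (sy (cu x) j - sy (cu y) j) \<le> norm (x - y)" "\<And>j. cmod (sy (cv x) j - sy (cv y) j) \<le> norm (x - y)"
    by (rule sy_lip, rule cu_lip)+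
  show "cmod (compu N t x k - compu N t y k) \<le> real N * (real (card (KS N)) * (2 * R * norm (x - y)))"
    unfolding compu_def by (rule sy_lip, rule Ru_lip(1)[OF b l]) (use assms in auto)
  show "cmod (compv N t x k - compv N t y k) \<le> real N * (real (card (KS N)) * (2 * R * norm (x - y)))"
    unfolding compv_def by (rule sy_lip, rule Ru_lip(2)[OF b l]) (use assms in auto)
qed

lemma dl_sum_lip:
  assumes "\<And>k. k \<in> KS N \<Longrightarrow> cmod (c k - c' k) \<le> e"
  shows "norm ((\<Sum>k\<in>KS N. dl k (c k)) - (\<Sum>k\<in>KS N. dl k (c' k))) \<le> real (card (KS N)) * e"
proof -
  have "(\<Sum>k\<in>KS N. dl k (c k)) - (\<Sum>k\<in>KS N. dl k (c' k)) = (\<Sum>k\<in>KS N. dl k (c k - c' k))"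
    by (simp only: dl_diff[symmetric] sum_subtractf)
  hence "norm ((\<Sum>k\<in>KS N. dl k (c k)) - (\<Sum>k\<in>KS N. dl k (c' k))) \<le> (\<Sum>k\<in>KS N. norm (dl k (c k - c' k)))"
    by (simp add: norm_sum)
  also have "\<dots> \<le> (\<Sum>k\<in>KS N. e)"
    by (rule sum_mono) (use assms dl_norm order_trans in blast)
  finally show ?thesis by simp
qed

lemma Fc_lip:
  assumes "norm x \<le> R" "norm y \<le> R" "0 \<le> R"
  shows "norm (Fc N t x - Fc N t y) \<le> (2 * real (card (KS N)) * (real N * (real (card (KS N)) * (2 * R)))) * norm (x - y)"
proof -
  let ?e = "real N * (real (card (KS N)) * (2 * R * norm (x - y)))"
  have "norm (Fc N t x - Fc N t y) \<le> norm (fst (Fc N t x - Fc N t y)) + norm (snd (Fc N t x - Fc N t y))"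
    using norm_Pair_le[of "fst (Fc N t x - Fc N t y)" "snd (Fc N t x - Fc N t y)"] by (simp only: prod.collapse)
  also have "\<dots> \<le> real (card (KS N)) * ?e + real (card (KS N)) * ?e"
    unfolding Fc_def fst_diff snd_diff fst_conv snd_conv
    by (intro add_mono dl_sum_lip comp_lip assms)
  finally show ?thesis by (simp add: algebra_simps)
qed

lemma dl_zero[simp]: "dl k 0 = 0" by (rule bcontfun_eqI) (simp add: dl_rep)

lemma Fc_zero: "Fc N t 0 = 0"
proof -
  have "cu 0 = (\<lambda>_. 0)" "cv 0 = (\<lambda>_. 0)" by (auto simp: cu_def cv_def)
  moreover have "sy (\<lambda>_. 0) = (\<lambda>_. 0)" by (auto simp: sy_def)
  moreover have "Ru N t (\<lambda>_. 0) (\<lambda>_. 0) = (\<lambda>_. 0)" "Rv N t (\<lambda>_. 0) (\<lambda>_. 0) = (\<lambda>_. 0)"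
    by (auto simp: Ru_def Rv_def Q_def)
  ultimately show ?thesis by (simp add: Fc_def compu_def compv_def zero_prod_def)
qed

lemma cont_Q:
  assumes "continuous_on S tt" "\<And>j. continuous_on S (\<lambda>p. f p j)" "\<And>j. continuous_on S (\<lambda>p. g p j)"
  shows "continuous_on S (\<lambda>p. Q N (tt p) (f p) (g p) k)"
  unfolding Q_def Exf_def by (intro continuous_intros assms)

lemma cont_sy:
  assumes "\<And>j. continuous_on S (\<lambda>p. f p j)"
  shows "continuous_on S (\<lambda>p. sy (f p) k)"
  unfolding sy_def by (intro continuous_intros assms) auto

lemma cont_Ru:
  assumes "continuous_on S tt" "\<And>j. continuous_on S (\<lambda>p. f p j)" "\<And>j. continuous_on S (\<lambda>p. g p j)"
  shows "continuous_on S (\<lambda>p. Ru N (tt p) (f p) (g p) k)" "continuous_on S (\<lambda>p. Rv N (tt p) (f p) (g p) k)"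
  unfolding Ru_def Rv_def by (cases "k \<in> KS N"; simp; intro continuous_intros cont_Q assms)+

lemma cont_Fc: "continuous_on S (\<lambda>p. Fc N (tt p) (xx p))" if "continuous_on S tt" "continuous_on S xx"
proof -
  have cx: "\<And>j. continuous_on S (\<lambda>p. sy (cu (xx p)) j)" "\<And>j. continuous_on S (\<lambda>p. sy (cv (xx p)) j)"
    unfolding cu_def cv_def by (intro cont_sy continuous_intros that)+
  have "continuous_on S (\<lambda>p. compu N (tt p) (xx p) k)" "continuous_on S (\<lambda>p. compv N (tt p) (xx p) k)" for k
    unfolding compu_def compv_def by (intro cont_sy cont_Ru that cx)+
  thus ?thesis unfolding Fc_def by (intro continuous_intros)
qed

lemma bl_cu: "bounded_linear (\<lambda>x. cu x j)" "bounded_linear (\<lambda>x. cv x j)"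
  unfolding cu_def cv_def
  by (rule bounded_linear_compose[OF bounded_linear_apply bounded_linear_fst],
      rule bounded_linear_compose[OF bounded_linear_apply bounded_linear_snd])

lemma cu_Fc: "cu (Fc N t y) j = (if j \<in> KS N then compu N t y j else 0)"
  and cv_Fc: "cv (Fc N t y) j = (if j \<in> KS N then compv N t y j else 0)"
  unfolding Fc_def cu_def cv_def by (simp_all add: sum_apply_bcontfun)

lemma cu_scale: "cu (c *\<^sub>R x) j = of_real c * cu x j" "cv (c *\<^sub>R x) j = of_real c * cv x j"
  by (simp_all add: cu_def cv_def scaleR_conv_of_real)

lemma sy_scale: "sy (\<lambda>j. of_real c * f j) = (\<lambda>j. of_real c * sy f j)"
  by (auto simp: sy_def algebra_simps)

lemma Q_scale: "Q N t (\<lambda>j. of_real c * f j) (\<lambda>j. of_real c * g j) k = of_real (c^2) * Q N t f g k"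
  unfolding Q_def sum_distrib_left by (rule sum.cong) (simp_all add: power2_eq_square algebra_simps)

lemma Ru_scale: "Ru N t (\<lambda>j. of_real c * a j) (\<lambda>j. of_real c * b j) = (\<lambda>j. of_real (c^2) * Ru N t a b j)"
  and Rv_scale: "Rv N t (\<lambda>j. of_real c * a j) (\<lambda>j. of_real c * b j) = (\<lambda>j. of_real (c^2) * Rv N t a b j)"
  by (auto simp: Ru_def Rv_def Q_scale algebra_simps)

lemma sy_scale2: "sy (\<lambda>j. of_real c * f j) k = of_real c * sy f k"
  using sy_scale[of c f] by metis

lemma comp_scale: "compu N t (c *\<^sub>R x) k = of_real (c^2) * compu N t x k"
  "compv N t (c *\<^sub>R x) k = of_real (c^2) * compv N t x k"
proof -
  have u: "cu (c *\<^sub>R x) = (\<lambda>j. of_real c * cu x j)" "cv (c *\<^sub>R x) = (\<lambda>j. of_real c * cv x j)"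
    by (auto simp: cu_scale)
  show "compu N t (c *\<^sub>R x) k = of_real (c^2) * compu N t x k"
    unfolding compu_def u sy_scale Ru_scale sy_scale2 ..
  show "compv N t (c *\<^sub>R x) k = of_real (c^2) * compv N t x k"
    unfolding compv_def u sy_scale Rv_scale sy_scale2 ..
qed

lemma sy_symm_id: "symm f \<Longrightarrow> sy f = f"
  by (auto simp: sy_def symm_def)

lemma sy_anti: "sy h j - cnj (sy h (- j)) = 0"
  by (simp add: sy_def)

lemma comp_symm: "symm (cu x) \<Longrightarrow> symm (cv x) \<Longrightarrow> compu N t x k = Ru N t (cu x) (cv x) k"
  "symm (cu x) \<Longrightarrow> symm (cv x) \<Longrightarrow> compv N t x k = Rv N t (cu x) (cv x) k"
  by (simp_all add: compu_def compv_def sy_symm_id Ru_symm Rv_symm)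

lemma Q_cong: "(\<And>j. j \<in> KS N \<Longrightarrow> f j = f' j) \<Longrightarrow> (\<And>j. j \<in> KS N \<Longrightarrow> g j = g' j) \<Longrightarrow> Q N t f g k = Q N t f' g' k"
  unfolding Q_def by (rule sum.cong) (auto simp: IS_def)

lemma R_cong: "(\<And>j. j \<in> KS N \<Longrightarrow> a j = a' j) \<Longrightarrow> (\<And>j. j \<in> KS N \<Longrightarrow> b j = b' j) \<Longrightarrow> Ru N t a b k = Ru N t a' b' k"
  "(\<And>j. j \<in> KS N \<Longrightarrow> a j = a' j) \<Longrightarrow> (\<And>j. j \<in> KS N \<Longrightarrow> b j = b' j) \<Longrightarrow> Rv N t a b k = Rv N t a' b' k"
proof -
  assume "\<And>j. j \<in> KS N \<Longrightarrow> a j = a' j" "\<And>j. j \<in> KS N \<Longrightarrow> b j = b' j"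
  hence "Q N t a b k = Q N t a' b' k" "Q N t a a k = Q N t a' a' k" "Q N t b b k = Q N t b' b' k"
    by (auto intro!: Q_cong)
  thus "Ru N t a b k = Ru N t a' b' k" "Rv N t a b k = Rv N t a' b' k" by (simp_all add: Ru_def Rv_def)
qed

lemma compu_cong:
  assumes "\<And>j. j \<in> KS N \<Longrightarrow> cu x j = cu y j" "\<And>j. j \<in> KS N \<Longrightarrow> cv x j = cv y j"
  shows "compu N t x k = compu N t y k" "compv N t x k = compv N t y k"
proof -
  have e: "\<And>j. j \<in> KS N \<Longrightarrow> sy (cu x) j = sy (cu y) j" "\<And>j. j \<in> KS N \<Longrightarrow> sy (cv x) j = sy (cv y) j"
    using assms by (auto simp: sy_def)
  have "Ru N t (sy (cu x)) (sy (cv x)) = Ru N t (sy (cu y)) (sy (cv y))"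
    by (rule ext, rule R_cong(1)) (use e in auto)
  thus "compu N t x k = compu N t y k" unfolding compu_def by simp
  have "Rv N t (sy (cu x)) (sy (cv x)) = Rv N t (sy (cu y)) (sy (cv y))"
    by (rule ext, rule R_cong(2)) (use e in auto)
  thus "compv N t x k = compv N t y k" unfolding compv_def by simp
qed

definition Pj :: "nat \<Rightarrow> bfun \<times> bfun \<Rightarrow> bfun \<times> bfun" where
  "Pj N x = ((\<Sum>k\<in>KS N. dl k (cu x k)), (\<Sum>k\<in>KS N. dl k (cv x k)))"

lemma cu_Pj: "cu (Pj N x) j = (if j \<in> KS N then cu x j else 0)"
  and cv_Pj: "cv (Pj N x) j = (if j \<in> KS N then cv x j else 0)"
  unfolding Pj_def cu_def cv_def by (simp_all add: sum_apply_bcontfun)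

lemma Pj_lip: "norm (Pj N x - Pj N y) \<le> 2 * real (card (KS N)) * norm (x - y)"
proof -
  have "norm (Pj N x - Pj N y) \<le> norm (fst (Pj N x - Pj N y)) + norm (snd (Pj N x - Pj N y))"
    using norm_Pair_le[of "fst (Pj N x - Pj N y)" "snd (Pj N x - Pj N y)"] by (simp only: prod.collapse)
  also have "\<dots> \<le> real (card (KS N)) * norm (x - y) + real (card (KS N)) * norm (x - y)"
    unfolding Pj_def fst_diff snd_diff fst_conv snd_conv
    by (intro add_mono dl_sum_lip cu_lip)
  finally show ?thesis by simp
qed

lemma Pj_bound:
  assumes "\<And>j. j \<in> KS N \<Longrightarrow> cmod (cu x j) \<le> e" "\<And>j. j \<in> KS N \<Longrightarrow> cmod (cv x j) \<le> e"
  shows "norm (Pj N x) \<le> 2 * real (card (KS N)) * e"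
proof -
  have z: "(\<Sum>k\<in>KS N. dl k 0) = 0" by simp
  have "norm (Pj N x) \<le> norm (fst (Pj N x)) + norm (snd (Pj N x))"
    using norm_Pair_le[of "fst (Pj N x)" "snd (Pj N x)"] by (simp only: prod.collapse)
  also have "norm (fst (Pj N x)) \<le> real (card (KS N)) * e"
    using dl_sum_lip[of N "cu x" "\<lambda>_. 0" e] assms by (simp add: Pj_def)
  also have "norm (snd (Pj N x)) \<le> real (card (KS N)) * e"
    using dl_sum_lip[of N "cv x" "\<lambda>_. 0" e] assms by (simp add: Pj_def)
  finally show ?thesis by (simp add: ac_simps)
qed

lemma cont_Pj[continuous_intros]: "continuous_on S f \<Longrightarrow> continuous_on S (\<lambda>p. Pj N (f p))"
  unfolding Pj_def cu_def cv_def by (intro continuous_intros)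

lemma PhiC_cong: "(\<And>j. j \<in> KS N \<Longrightarrow> a j = a' j) \<Longrightarrow> (\<And>j. j \<in> KS N \<Longrightarrow> b j = b' j) \<Longrightarrow> PhiC N a b = PhiC N a' b'"
  unfolding PhiC_def by (rule sum.cong) auto

lemma EL_term_bound:
  assumes "j \<in> KS N"
  shows "cmod (a j) \<le> sqrt (EL N a b)" "cmod (b j) \<le> sqrt (EL N a b)"
proof -
  let ?f = "\<lambda>k. 2 * (cmod (a k))\<^sup>2 + 2 * (cmod (b k))\<^sup>2 + (cmod (a k - b k))\<^sup>2"
  have "?f j \<le> EL N a b" unfolding EL_def by (rule member_le_sum) (use assms in auto)
  hence "(cmod (a j))\<^sup>2 \<le> EL N a b" "(cmod (b j))\<^sup>2 \<le> EL N a b"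
    by (smt (verit) zero_le_power2)+
  thus "cmod (a j) \<le> sqrt (EL N a b)" "cmod (b j) \<le> sqrt (EL N a b)"
    by (simp_all add: real_le_rsqrt)
qed

lemma in_H0_change:
  assumes "in_H0 w" "\<And>k. k \<notin> KS N \<Longrightarrow> w' k = w k" "symm w'"
  shows "in_H0 w'"
proof -
  have "w' 0 = 0" using assms(1) assms(2)[of 0] by (simp add: in_H0_def)
  moreover have "(\<lambda>k. (cmod (w' k))\<^sup>2) summable_on (UNIV - {0})"
    by (rule infsum_change(2)[where f="\<lambda>k. (cmod (w k))\<^sup>2" and F="KS N"]) (use assms in \<open>auto simp: in_H0_def\<close>)
  ultimately show ?thesis using assms(3) by (simp add: in_H0_def symm_def)
qed

lemma existence:
  assumes ui: "in_H0 uin" and vi: "in_H0 vin"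
  shows "\<exists>u v. galerkin_solution N uin vin u v"
proof -
  have su: "symm uin" and sv: "symm vin" using ui vi by (auto simp: in_H0_def symm_def)
  define E0 where "E0 = EL N uin vin"
  have E0: "0 \<le> E0" unfolding E0_def EL_def by (intro sum_nonneg) auto
  define R :: real where "R = 2 * real (card (KS N)) * sqrt E0 + 1"
  have R: "0 < R" using E0 by (simp add: R_def add_nonneg_pos)
  define LR where "LR = 2 * real (card (KS N)) * (real N * (real (card (KS N)) * (2 * R)))"
  have LR: "0 \<le> LR" using R by (simp add: LR_def)
  define FF where "FF t x = Fc N t (rr R (Pj N x))" for t x
  define L where "L = 4 * real (card (KS N)) * LR + 1"
  have lipF: "norm (FF t x - FF t y) \<le> L * norm (x - y)" for t x y
  proof -
    have "norm (FF t x - FF t y) \<le> LR * norm (rr R (Pj N x) - rr R (Pj N y))"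
      unfolding FF_def LR_def by (rule Fc_lip) (use rr_norm[OF R] R in auto)
    also have "\<dots> \<le> LR * (2 * norm (Pj N x - Pj N y))" by (rule mult_left_mono[OF rr_lip[OF R] LR])
    also have "\<dots> \<le> LR * (2 * (2 * real (card (KS N)) * norm (x - y)))"
      using Pj_lip[of N x y] LR by (intro mult_left_mono) auto
    also have "\<dots> \<le> L * norm (x - y)" by (simp add: L_def algebra_simps)
    finally show ?thesis .
  qed
  have bndF: "norm (FF t x) \<le> LR * R" for t x
  proof -
    have "norm (FF t x) = norm (Fc N t (rr R (Pj N x)) - Fc N t 0)" by (simp add: FF_def Fc_zero)
    also have "\<dots> \<le> LR * norm (rr R (Pj N x) - 0)" unfolding LR_def by (rule Fc_lip) (use rr_norm[OF R] R in auto)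
    also have "\<dots> = LR * norm (rr R (Pj N x))" by simp
    also have "\<dots> \<le> LR * R" by (rule mult_left_mono[OF rr_norm[OF R] LR])
    finally show ?thesis .
  qed
  have contF: "continuous_on UNIV (\<lambda>p. FF (fst p) (snd p))"
    unfolding FF_def
    by (rule cont_Fc, intro continuous_intros, rule continuous_on_compose2[OF rr_cont[OF R]]) (auto intro!: continuous_intros)
  define x0 where "x0 = ((\<Sum>k\<in>KS N. dl k (uin k)), (\<Sum>k\<in>KS N. dl k (vin k)))"
  have L: "0 < L" unfolding L_def using LR by (simp add: add_nonneg_pos)
  obtain X where X0: "X 0 = x0" and XD: "\<And>t. 0 \<le> t \<Longrightarrow> (X has_vector_derivative FF t (X t)) (at t within {0..})"
    using picard_global[of FF L "LR * R" x0] contF lipF bndF L by blast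
  define a where "a s j = cu (X s) j" for s j
  define b where "b s j = cv (X s) j" for s j
  have cua: "cu (X s) = a s" "cv (X s) = b s" for s by (auto simp: a_def b_def)
  define cc where "cc s = (if norm (Pj N (X s)) \<le> R then 1 else R / norm (Pj N (X s)))" for s
  have rrX: "rr R (Pj N (X s)) = cc s *\<^sub>R Pj N (X s)" for s by (simp add: rr_scale cc_def)
  have a0: "a 0 j = (if j \<in> KS N then uin j else 0)" "b 0 j = (if j \<in> KS N then vin j else 0)" for j
    by (simp_all add: a_def b_def X0 x0_def cu_def cv_def sum_apply_bcontfun)
  have da: "((\<lambda>s. a s j) has_vector_derivative (if j \<in> KS N then compu N s (rr R (Pj N (X s))) j else 0)) (at s within {0..})"
   and db: "((\<lambda>s. b s j) has_vector_derivative (if j \<in> KS N then compv N s (rr R (Pj N (X s))) j else 0)) (at s within {0..})"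
    if "0 \<le> s" for s j
    using bounded_linear.has_vector_derivative[OF bl_cu(1) XD[OF that]]
      bounded_linear.has_vector_derivative[OF bl_cu(2) XD[OF that]]
    by (simp_all add: a_def b_def FF_def cu_Fc cv_Fc)
  have cnj_in: "cnj (uin (- j)) = uin j" "cnj (vin (- j)) = vin j" for j
    using su sv unfolding symm_def by (metis minus_minus)+
  have symab: "symm (a s) \<and> symm (b s)" if s: "0 \<le> s" for s
  proof -
    have wa: "a s j - cnj (a s (-j)) = 0" for j
    proof -
      have "(\<lambda>s. a s j - cnj (a s (-j))) s = (\<lambda>s. a s j - cnj (a s (-j))) 0"
      proof (rule const_on_Ici[OF _ s])
        fix s' :: real assume s': "0 \<le> s'"
        have "((\<lambda>s. a s j - cnj (a s (-j))) has_vector_derivative ((if j \<in> KS N then compu N s' (rr R (Pj N (X s'))) j else 0) - cnj (if -j \<in> KS N then compu N s' (rr R (Pj N (X s'))) (-j) else 0))) (at s' within {0..})"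
          by (intro has_vector_derivative_diff has_vector_derivative_cnj da s')
        moreover have "(if j \<in> KS N then compu N s' (rr R (Pj N (X s'))) j else 0) - cnj (if -j \<in> KS N then compu N s' (rr R (Pj N (X s'))) (-j) else 0) = 0"
          by (simp add: compu_def sy_def)
        ultimately show "((\<lambda>s. a s j - cnj (a s (-j))) has_vector_derivative 0) (at s' within {0..})" by simp
      qed
      thus ?thesis by (simp add: a0 cnj_in)
    qed
    have wb: "b s j - cnj (b s (-j)) = 0" for j
    proof -
      have "(\<lambda>s. b s j - cnj (b s (-j))) s = (\<lambda>s. b s j - cnj (b s (-j))) 0"
      proof (rule const_on_Ici[OF _ s])
        fix s' :: real assume s': "0 \<le> s'"
        have "((\<lambda>s. b s j - cnj (b s (-j))) has_vector_derivative ((if j \<in> KS N then compv N s' (rr R (Pj N (X s'))) j else 0) - cnj (if -j \<in> KS N then compv N s' (rr R (Pj N (X s'))) (-j) else 0))) (at s' within {0..})"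
          by (intro has_vector_derivative_diff has_vector_derivative_cnj db s')
        moreover have "(if j \<in> KS N then compv N s' (rr R (Pj N (X s'))) j else 0) - cnj (if -j \<in> KS N then compv N s' (rr R (Pj N (X s'))) (-j) else 0) = 0"
          by (simp add: compv_def sy_def)
        ultimately show "((\<lambda>s. b s j - cnj (b s (-j))) has_vector_derivative 0) (at s' within {0..})" by simp
      qed
      thus ?thesis by (simp add: a0 cnj_in)
    qed
    show ?thesis unfolding symm_def using wa wb by (metis eq_iff_diff_eq_0 minus_minus)
  qed
  have zab: "a s j = 0 \<and> b s j = 0" if s: "0 \<le> s" and j: "j \<notin> KS N" for s j
  proof -
    have "(\<lambda>s. a s j) s = (\<lambda>s. a s j) 0"
    proof (rule const_on_Ici[OF _ s])
      fix s' :: real assume "0 \<le> s'"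
      thus "((\<lambda>s. a s j) has_vector_derivative 0) (at s' within {0..})" using da[of s' j] j by simp
    qed
    moreover have "(\<lambda>s. b s j) s = (\<lambda>s. b s j) 0"
    proof (rule const_on_Ici[OF _ s])
      fix s' :: real assume "0 \<le> s'"
      thus "((\<lambda>s. b s j) has_vector_derivative 0) (at s' within {0..})" using db[of s' j] j by simp
    qed
    ultimately show ?thesis using j by (simp add: a0)
  qed
  have cmp: "compu N s (rr R (Pj N (X s))) j = of_real ((cc s)^2) * Ru N s (a s) (b s) j"
    "compv N s (rr R (Pj N (X s))) j = of_real ((cc s)^2) * Rv N s (a s) (b s) j" if s: "0 \<le> s" for s j
  proof -
    have "compu N s (Pj N (X s)) j = compu N s (X s) j" "compv N s (Pj N (X s)) j = compv N s (X s) j"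
      by (rule compu_cong; simp add: cu_Pj cv_Pj)+
    thus "compu N s (rr R (Pj N (X s))) j = of_real ((cc s)^2) * Ru N s (a s) (b s) j"
      "compv N s (rr R (Pj N (X s))) j = of_real ((cc s)^2) * Rv N s (a s) (b s) j"
      unfolding rrX comp_scale using comp_symm[of "X s"] symab[OF s] by (simp_all add: cua)
  qed
  have da2: "((\<lambda>s. a s j) has_vector_derivative of_real ((cc s)^2) * Ru N s (a s) (b s) j) (at s within {0..})"
   and db2: "((\<lambda>s. b s j) has_vector_derivative of_real ((cc s)^2) * Rv N s (a s) (b s) j) (at s within {0..})"
    if s: "0 \<le> s" for s j
    using da[OF s, of j] db[OF s, of j] by (auto simp: cmp[OF s] Ru_def Rv_def)
  have Ph: "PhiC N (a s) (b s) = PhiC N (a 0) (b 0)" if s: "0 \<le> s" for s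
  proof -
    have "(\<lambda>s. PhiC N (a s) (b s)) s = (\<lambda>s. PhiC N (a s) (b s)) 0"
    proof (rule const_on_Ici[OF _ s])
      fix s' :: real assume s': "0 \<le> s'"
      let ?c = "of_real ((cc s')^2) :: complex"
      have D: "((\<lambda>s. PhiC N (a s) (b s)) has_vector_derivative
           ((\<Sum>k\<in>KS N. cnj (3 * a s' k - b s' k) * (?c * Ru N s' (a s') (b s') k) + cnj (3 * b s' k - a s' k) * (?c * Rv N s' (a s') (b s') k))
             + cnj (\<Sum>k\<in>KS N. cnj (3 * a s' k - b s' k) * (?c * Ru N s' (a s') (b s') k) + cnj (3 * b s' k - a s' k) * (?c * Rv N s' (a s') (b s') k)))) (at s' within {0..})"
        by (rule phi_deriv) (use da2[OF s'] db2[OF s'] in auto)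
      have E1: "(\<Sum>k\<in>KS N. cnj (3 * a s' k - b s' k) * (?c * Ru N s' (a s') (b s') k) + cnj (3 * b s' k - a s' k) * (?c * Rv N s' (a s') (b s') k))
         = ?c * (\<Sum>k\<in>KS N. cnj (3 * a s' k - b s' k) * Ru N s' (a s') (b s') k + cnj (3 * b s' k - a s' k) * Rv N s' (a s') (b s') k)"
        by (simp add: sum_distrib_left algebra_simps)
      have E2: "(\<Sum>k\<in>KS N. cnj (3 * a s' k - b s' k) * Ru N s' (a s') (b s') k + cnj (3 * b s' k - a s' k) * Rv N s' (a s') (b s') k) = 0"
        using cancel symab[OF s'] by blast
      have Y0: "(\<Sum>k\<in>KS N. cnj (3 * a s' k - b s' k) * (?c * Ru N s' (a s') (b s') k) + cnj (3 * b s' k - a s' k) * (?c * Rv N s' (a s') (b s') k)) = 0"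
        unfolding E1 E2 by simp
      show "((\<lambda>s. PhiC N (a s) (b s)) has_vector_derivative 0) (at s' within {0..})"
        using D unfolding Y0 by simp
    qed
    thus ?thesis by simp
  qed
  have ELs: "EL N (a s) (b s) = E0" if s: "0 \<le> s" for s
  proof -
    have "PhiC N (a 0) (b 0) = PhiC N uin vin" by (rule PhiC_cong) (simp_all add: a0)
    thus ?thesis using Ph[OF s] by (simp add: PhiC_EL E0_def)
  qed
  have nX: "norm (Pj N (X s)) < R" if s: "0 \<le> s" for s
  proof -
    have "norm (Pj N (X s)) \<le> 2 * real (card (KS N)) * sqrt E0"
      by (rule Pj_bound) (use EL_term_bound(1)[where N=N and a="a s" and b="b s"] EL_term_bound(2)[where N=N and a="a s" and b="b s"] ELs[OF s] in \<open>auto simp: cua\<close>)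
    thus ?thesis by (simp add: R_def)
  qed
  have cc1: "cc s = 1" if "0 \<le> s" for s using nX[OF that] by (simp add: cc_def)
  define u where "u t k = (if k \<in> KS N then a t k else uin k)" for t k
  define v where "v t k = (if k \<in> KS N then b t k else vin k)" for t k
  have "galerkin_solution N uin vin u v"
    unfolding galerkin_solution_def
  proof (intro conjI allI impI)
    show "u 0 = uin" by (auto simp: u_def a0)
    show "v 0 = vin" by (auto simp: v_def a0)
  next
    fix t :: real assume t: "0 \<le> t"
    show "in_H0 (u t)"
      by (rule in_H0_change[OF ui, of N]) (use symab[OF t] su in \<open>auto simp: u_def symm_def\<close>)
    show "in_H0 (v t)"
      by (rule in_H0_change[OF vi, of N]) (use symab[OF t] sv in \<open>auto simp: v_def symm_def\<close>)
  next
    fix t :: real and k :: int assume t: "0 \<le> t"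
    have RR: "Ru N t (a t) (b t) k = Ru N t (u t) (v t) k" "Rv N t (a t) (b t) k = Rv N t (u t) (v t) k"
      by (rule R_cong; simp add: u_def v_def)+
    show "((\<lambda>s. u s k) has_vector_derivative rhs_u N t (u t) (v t) k) (at t within {0..})"
    proof (cases "k \<in> KS N")
      case True
      thus ?thesis using da2[OF t, of k] by (simp add: u_def cc1[OF t] rhs_u_eq RR)
    next
      case False
      thus ?thesis by (simp add: u_def rhs_u_eq Ru_def)
    qed
    show "((\<lambda>s. v s k) has_vector_derivative rhs_v N t (u t) (v t) k) (at t within {0..})"
    proof (cases "k \<in> KS N")
      case True
      thus ?thesis using db2[OF t, of k] by (simp add: v_def cc1[OF t] rhs_v_eq RR)
    next
      case False
      thus ?thesis by (simp add: v_def rhs_v_eq Rv_def)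
    qed
  qed
  thus ?thesis by blast
qed

theorem proposition5p2:
  fixes uin vin :: "int \<Rightarrow> complex" and N :: nat
  assumes "in_H0 uin" and "in_H0 vin" and "N > 0"
  shows "(\<exists>u v. galerkin_solution N uin vin u v) \<and>
         (\<forall>u v. galerkin_solution N uin vin u v \<longrightarrow>
            (\<forall>t\<ge>0. energy (u t) (v t) = energy uin vin))"
  proof
  show "\<exists>u v. galerkin_solution N uin vin u v" by (rule existence[OF assms(1) assms(2)])
  show "\<forall>u v. galerkin_solution N uin vin u v \<longrightarrow> (\<forall>t\<ge>0. energy (u t) (v t) = energy uin vin)"
    using conservation assms(1) assms(2) by blast
qed

end
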